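(* Let $\alpha=(\alpha_1,\dots,\alpha_n)\in\mathbb{R}^n$ with $\alpha_1,\dots,\alpha_n,1$ linearly independent over $\mathbb{Q}$, $\ell=n+1$. If $L_\alpha$ is badly approximable, then there are constants $c,C>0$ depending only on $\alpha$ such that for every $m\in\mathbb{Z}^+$, the numbers $\beta_1,\dots,\beta_\ell$ defined by $A_m(\alpha_1,\dots,\alpha_n,1)^\top=(\beta_1,\dots,\beta_\ell)^\top$ satisfy $$c\,m^{-n}<|\beta_1|<\cdots<|\beta_\ell|<C\,m^{-n}.$$
   Context: $L_\alpha(x)=\alpha_1x_1+\cdots+\alpha_nx_n$; $\|t\|$ is the distance from $t\in\mathbb{R}$ to the nearest integer; $\|\cdot\|_\infty$ is the maximum absolute value of entries. $L_\alpha$ is badly approximable if there is $c>0$ with $\|L_\alpha(q)\|\ge c\|q\|_\infty^{-n}$ for all nonzero $q\in\mathbb{Z}^n$. For $r=(r_1,\dots,r_\ell)\in\mathbb{Z}^\ell$, $\xi(r)=r_1\alpha_1+\cdots+r_n\alpha_n+r_\ell$. $A_m$ (Minkowski's algorithm) is the nonsingular integral $\ell\times\ell$ matrix with rows $w_1,\dots,w_\ell$ chosen successively: $w_i$ is the vector $w\in\mathbb{Z}^\ell$ with $\|w\|_\infty\le m$, linearly independent of $w_1,\dots,w_{i-1}$, minimizing $|\xi(w)|$, normalized so that its first nonzero entry is positive; $\beta_i=\xi(w_i)$. *)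

theory Defs
  imports Complex_Main
begin

(* Conventions: alpha :: nat => real, alpha_1..alpha_n are alpha 0 .. alpha (n-1).
   Integer vectors in Z^l (l = n+1) are functions nat => int, entries 0..n;
   entry n plays the role of r_l (the coefficient of 1). *)

definition dist_int :: "real \<Rightarrow> real" where
  "dist_int t = \<bar>t - of_int (round t)\<bar>"

definition L_form :: "nat \<Rightarrow> (nat \<Rightarrow> real) \<Rightarrow> (nat \<Rightarrow> int) \<Rightarrow> real" where
  "L_form n \<alpha> q = (\<Sum>j<n. of_int (q j) * \<alpha> j)"

definition sup_norm :: "nat \<Rightarrow> (nat \<Rightarrow> int) \<Rightarrow> int" where
  "sup_norm k q = Max ({\<bar>q j\<bar> | j. j < k} \<union> {0})"

definition Q_lin_indep_with_1 :: "nat \<Rightarrow> (nat \<Rightarrow> real) \<Rightarrow> bool" where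
  "Q_lin_indep_with_1 n \<alpha> \<longleftrightarrow>
     (\<forall>c :: nat \<Rightarrow> rat.
        (\<Sum>j<n. of_rat (c j) * \<alpha> j) + of_rat (c n) = 0 \<longrightarrow> (\<forall>j\<le>n. c j = 0))"

definition badly_approximable :: "nat \<Rightarrow> (nat \<Rightarrow> real) \<Rightarrow> bool" where
  "badly_approximable n \<alpha> \<longleftrightarrow>
     (\<exists>c>0. \<forall>q :: nat \<Rightarrow> int. (\<exists>j<n. q j \<noteq> 0) \<longrightarrow>
        dist_int (L_form n \<alpha> q) \<ge> c * (real_of_int (sup_norm n q)) powr (- real n))"

definition xi :: "nat \<Rightarrow> (nat \<Rightarrow> real) \<Rightarrow> (nat \<Rightarrow> int) \<Rightarrow> real" where
  "xi n \<alpha> r = (\<Sum>j<n. of_int (r j) * \<alpha> j) + of_int (r n)"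

definition int_vecs_indep :: "nat \<Rightarrow> nat \<Rightarrow> (nat \<Rightarrow> nat \<Rightarrow> int) \<Rightarrow> bool" where
  "int_vecs_indep l k v \<longleftrightarrow>
     (\<forall>c :: nat \<Rightarrow> rat.
        (\<forall>j<l. (\<Sum>i<k. c i * of_int (v i j)) = 0) \<longrightarrow> (\<forall>i<k. c i = 0))"

(* w 0, ..., w (n) are the rows of A_m produced by Minkowski's algorithm
   (dimension l = n+1): row i has sup norm <= m, is linearly independent of
   the previous rows, minimizes |xi| among such vectors, and its first
   nonzero entry is positive. *)
definition minkowski_rows :: "nat \<Rightarrow> (nat \<Rightarrow> real) \<Rightarrow> nat \<Rightarrow> (nat \<Rightarrow> nat \<Rightarrow> int) \<Rightarrow> bool" where
  "minkowski_rows n \<alpha> m w \<longleftrightarrow>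
     (\<forall>i < Suc n.
        (\<forall>j < Suc n. \<bar>w i j\<bar> \<le> int m) \<and>
        int_vecs_indep (Suc n) (Suc i) w \<and>
        (\<exists>j < Suc n. w i j > 0 \<and> (\<forall>j' < j. w i j' = 0)) \<and>
        (\<forall>u :: nat \<Rightarrow> int.
           (\<forall>j < Suc n. \<bar>u j\<bar> \<le> int m) \<and> int_vecs_indep (Suc n) (Suc i) (w(i := u))
           \<longrightarrow> \<bar>xi n \<alpha> (w i)\<bar> \<le> \<bar>xi n \<alpha> u\<bar>))"

end

theory Submission
  imports Defs "HOL-Library.FuncSet"
begin

lemma exists_orth:
  fixes v :: "'i \<Rightarrow> nat \<Rightarrow> real"
  assumes "finite I" "card I < d"
  shows "\<exists>a. (\<exists>j<d. a j \<noteq> 0) \<and> (\<forall>i\<in>I. (\<Sum>j<d. a j * v i j) = 0)"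
  using assms
proof (induction d arbitrary: I v)
  case 0
  then show ?case by simp
next
  case (Suc d)
  show ?case
  proof (cases "\<forall>i\<in>I. v i d = 0")
    case True
    define a where "a = (\<lambda>j. if j = d then (1::real) else 0)"
    have "\<forall>i\<in>I. (\<Sum>j<Suc d. a j * v i j) = 0"
      using True by (simp add: a_def)
    moreover have "a d \<noteq> 0" by (simp add: a_def)
    ultimately show ?thesis by blast
  next
    case False
    then obtain i0 where i0: "i0 \<in> I" "v i0 d \<noteq> 0" by blast
    define v' where "v' = (\<lambda>i j. v i j - (v i d / v i0 d) * v i0 j)"
    have cI: "card (I - {i0}) < d" using Suc.prems i0 card_gt_0_iff[of I] by (auto simp add: card_Diff_singleton)
    obtain a' where a': "\<exists>j<d. a' j \<noteq> 0" "\<forall>i\<in>I - {i0}. (\<Sum>j<d. a' j * v' i j) = 0"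
      using Suc.IH[OF _ cI, of v'] Suc.prems by auto
    define t where "t = - (\<Sum>j<d. a' j * v i0 j) / v i0 d"
    define a where "a = (\<lambda>j. if j < d then a' j else if j = d then t else 0)"
    have s0: "(\<Sum>j<Suc d. a j * v i0 j) = 0"
      using i0 by (simp add: a_def t_def)
    have "(\<Sum>j<Suc d. a j * v i j) = 0" if "i \<in> I" for i
    proof (cases "i = i0")
      case True then show ?thesis using s0 by simp
    next
      case False
      have v'd: "v' i d = 0" using i0 by (simp add: v'_def)
      have e1: "(\<Sum>j<Suc d. a j * v' i j) = 0"
        using a'(2) that False v'd by (simp add: a_def)
      have "(\<Sum>j<Suc d. a j * v' i j) + (v i d / v i0 d) * (\<Sum>j<Suc d. a j * v i0 j)
          = (\<Sum>j<Suc d. a j * v' i j + (v i d / v i0 d) * (a j * v i0 j))"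
        by (simp only: sum.distrib sum_distrib_left)
      also have "\<dots> = (\<Sum>j<Suc d. a j * v i j)"
        by (rule sum.cong) (simp_all add: v'_def algebra_simps)
      finally have "(\<Sum>j<Suc d. a j * v i j) = (\<Sum>j<Suc d. a j * v' i j) + (v i d / v i0 d) * (\<Sum>j<Suc d. a j * v i0 j)" by simp
      then show ?thesis using e1 s0 by simp
    qed
    moreover have "\<exists>j<Suc d. a j \<noteq> 0" using a'(1) by (auto simp: a_def)
    ultimately show ?thesis by blast
  qed
qed

lemma dist_int_le: "dist_int t \<le> \<bar>t - of_int z\<bar>"
proof (cases "z = round t")
  case True then show ?thesis by (simp add: dist_int_def)
next
  case False
  have h: "\<bar>of_int (round t) - t\<bar> \<le> 1/2" by (rule of_int_round_abs_le)
  have "\<bar>z - round t\<bar> \<ge> 1" using False by linarith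
  hence "\<bar>real_of_int z - of_int (round t)\<bar> \<ge> 1"
    by (metis of_int_1_le_iff of_int_abs of_int_diff)
  then show ?thesis using h unfolding dist_int_def by linarith
qed

lemma sup_norm_ge: "j < n \<Longrightarrow> \<bar>q j\<bar> \<le> sup_norm n q"
  unfolding sup_norm_def by (rule Max_ge) auto


lemma sup_norm_less:
  assumes "\<forall>j<n. real_of_int \<bar>q j\<bar> < B" "B > 0"
  shows "real_of_int (sup_norm n q) < B"
proof -
  have "sup_norm n q \<in> ({\<bar>q j\<bar> | j. j < n} \<union> {0})"
    unfolding sup_norm_def by (rule Max_in) auto
  then show ?thesis using assms by auto
qed

lemma sup_norm_le:
  assumes "\<forall>j<n. \<bar>q j\<bar> \<le> B" "B \<ge> 0"
  shows "sup_norm n q \<le> B"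
proof -
  have "sup_norm n q \<in> ({\<bar>q j\<bar> | j. j < n} \<union> {0})"
    unfolding sup_norm_def by (rule Max_in) auto
  then show ?thesis using assms by auto
qed

lemma xi_zero:
  assumes "Q_lin_indep_with_1 n \<alpha>" "xi n \<alpha> r = 0"
  shows "\<forall>j\<le>n. r j = 0"
proof -
  have e: "(\<Sum>j<n. of_rat (of_int (r j)) * \<alpha> j) + of_rat (of_int (r n)) = 0"
    using assms(2) by (simp add: xi_def)
  have A: "\<forall>c :: nat \<Rightarrow> rat.
        (\<Sum>j<n. of_rat (c j) * \<alpha> j) + of_rat (c n) = 0 \<longrightarrow> (\<forall>j\<le>n. c j = 0)"
    using assms(1) by (simp only: Q_lin_indep_with_1_def)
  have "\<forall>j\<le>n. (of_int (r j) :: rat) = 0"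
    using A[rule_format, of "\<lambda>j. of_int (r j)"] e by blast
  then show ?thesis by simp
qed


lemma powr_neg_nat: "(x::real) > 0 \<Longrightarrow> x powr (- real n) = inverse (x ^ n)"
  by (simp add: powr_minus powr_realpow)

lemma xi_diff: "xi n \<alpha> (\<lambda>j. r j - s j) = xi n \<alpha> r - xi n \<alpha> s"
  by (simp add: xi_def algebra_simps sum_subtractf)

lemma xi_add: "xi n \<alpha> (\<lambda>j. r j + s j) = xi n \<alpha> r + xi n \<alpha> s"
  by (simp add: xi_def algebra_simps sum.distrib)

lemma xi_L: "xi n \<alpha> r = L_form n \<alpha> r + of_int (r n)"
  by (simp add: xi_def L_form_def)

lemma xi_ge_dist: "\<bar>xi n \<alpha> r\<bar> \<ge> dist_int (L_form n \<alpha> r)"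
  using dist_int_le[of "L_form n \<alpha> r" "- r n"] by (simp add: xi_L)

lemma floor_eq_close: "\<lfloor>x::real\<rfloor> = \<lfloor>y\<rfloor> \<Longrightarrow> \<bar>x - y\<bar> < 1"
  using floor_correct[of x] floor_correct[of y] by linarith

lemma core_count:
  fixes n Q N M :: nat and \<alpha> a :: "nat \<Rightarrow> real" and c0 :: real
  assumes n1: "n \<ge> 1"
    and bad: "\<forall>q. (\<exists>j<n. q j \<noteq> 0) \<longrightarrow>
        dist_int (L_form n \<alpha> q) \<ge> c0 * (real_of_int (sup_norm n q)) powr (- real n)"
    and c0: "c0 > 0"
    and M: "c0 * real M \<ge> 2 * real n ^ (n+1)" "M \<ge> 1"
    and N: "N \<ge> 1" "real ((Q+1)^n) \<le> 2 * real M ^ n * real N" "N * M^n < (Q+1)^n"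
    and a: "\<exists>j<Suc n. a j \<noteq> 0"
  shows "\<exists>y. (\<forall>j<n. \<bar>y j\<bar> \<le> int Q) \<and> \<bar>xi n \<alpha> y\<bar> < 1 / real N \<and>
             (\<Sum>j<Suc n. a j * of_int (y j)) \<noteq> 0"
proof (rule ccontr)
  assume "\<not> ?thesis"
  then have H: "\<And>y. (\<forall>j<n. \<bar>y j\<bar> \<le> int Q) \<Longrightarrow> \<bar>xi n \<alpha> y\<bar> < 1 / real N \<Longrightarrow>
             (\<Sum>j<Suc n. a j * of_int (y j)) = 0" by blast
  define L where "L = (\<lambda>q. L_form n \<alpha> q)"
  define fr where "fr = (\<lambda>q. frac (L q))"
  define k where "k = (\<lambda>q. \<lfloor>real N * fr q\<rfloor>)"
  define t where "t = (\<lambda>q. real N * fr q - of_int (k q))"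
  define v where "v = (\<lambda>q j. if j < n then real_of_int (q j) / (real Q + 1) else t q)"
  define g where "g = (\<lambda>j. if j < n then (a j - a n * \<alpha> j) * (real Q + 1) else a n / real N)"
  have Npos: "real N > 0" using N by simp
  have hQ: "real Q + 1 > 0" by simp
  obtain j0 where j0: "j0 < Suc n" "\<forall>j<Suc n. \<bar>g j\<bar> \<le> \<bar>g j0\<bar>"
  proof -
    let ?S = "(\<lambda>j. \<bar>g j\<bar>) ` {..<Suc n}"
    have "Max ?S \<in> ?S" by (rule Max_in) auto
    then obtain j0 where "j0 < Suc n" "\<bar>g j0\<bar> = Max ?S" by auto
    moreover have "\<forall>j<Suc n. \<bar>g j\<bar> \<le> Max ?S" by auto
    ultimately show ?thesis using that by auto
  qed
  have gj0: "g j0 \<noteq> 0"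
  proof
    assume g0: "g j0 = 0"
    then have allg: "\<forall>j<Suc n. g j = 0" using j0 by force
    then have "a n = 0" using Npos by (auto simp: g_def)
    moreover have "a j = 0" if "j < n" for j
      using allg[rule_format, of j] that \<open>a n = 0\<close> by (simp add: g_def add_pos_nonneg)
    ultimately show False using a less_Suc_eq by auto
  qed
  define D where "D = PiE {..<n} (\<lambda>_. {0..int Q})"
  define Rest where "Rest = {..<Suc n} - {j0}"
  define lab where "lab = (\<lambda>q. (k q, restrict (\<lambda>j. \<lfloor>real M * v q j\<rfloor>) Rest))"
  define R where "R = {0..<int N} \<times> PiE Rest (\<lambda>_. {0..<int M})"
  have cardRest: "card Rest = n" using j0 by (simp add: Rest_def)
  have fr01: "0 \<le> fr q \<and> fr q < 1" for q by (simp add: fr_def frac_lt_1)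
  have k01: "0 \<le> k q \<and> k q < int N" for q
  proof -
    have "0 \<le> real N * fr q" "real N * fr q < real N" using fr01[of q] Npos by auto
    then show ?thesis unfolding k_def by (simp add: floor_less_iff)
  qed
  have t01: "0 \<le> t q \<and> t q < 1" for q
    unfolding t_def k_def using floor_correct[of "real N * fr q"] by linarith
  have v01: "0 \<le> v q j \<and> v q j < 1" if "q \<in> D" "j < Suc n" for q j
  proof (cases "j < n")
    case True
    then have "0 \<le> q j" "q j \<le> int Q" using that by (auto simp: D_def PiE_iff)
    then show ?thesis using True by (simp add: v_def)
  next
    case False then show ?thesis using t01 by (simp add: v_def)
  qed
  have labR: "lab ` D \<subseteq> R"
  proof
    fix z assume "z \<in> lab ` D"
    then obtain q where q: "q \<in> D" "z = lab q" by auto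
    have "\<lfloor>real M * v q j\<rfloor> \<in> {0..<int M}" if "j \<in> Rest" for j
    proof -
      have "j < Suc n" using that by (simp add: Rest_def)
      then have "0 \<le> real M * v q j" "real M * v q j < real M"
        using v01[OF q(1)] M(2) by (auto simp: mult_less_cancel_left1)
      then show ?thesis by (simp add: floor_less_iff)
    qed
    then show "z \<in> R" using q k01 by (auto simp: lab_def R_def)
  qed
  have nQ: "nat (int Q + 1) = Suc Q" by (metis add.commute nat_int of_nat_Suc)
  have cardD: "card D = (Q+1)^n" by (simp add: D_def card_PiE nQ)
  have finRest: "finite Rest" by (simp add: Rest_def)
  have cardR: "card R = N * M^n" by (simp add: R_def card_PiE card_cartesian_product cardRest finRest)
  have finR: "finite R" by (simp add: R_def finRest finite_PiE)
  have "card (lab ` D) \<le> card R" by (rule card_mono[OF finR labR])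
  then have "card (lab ` D) < card D" using cardD cardR N(3) by linarith
  then have "\<not> inj_on lab D" by (metis card_image less_irrefl)
  then obtain q q' where qq: "q \<in> D" "q' \<in> D" "q \<noteq> q'" "lab q = lab q'"
    by (auto simp: inj_on_def)
  have qD: "0 \<le> q j \<and> q j \<le> int Q" "0 \<le> q' j \<and> q' j \<le> int Q" if "j < n" for j
    using qq(1,2) that by (auto simp: D_def PiE_iff)
  define y where "y = (\<lambda>j. if j < n then q j - q' j else if j = n then \<lfloor>L q'\<rfloor> - \<lfloor>L q\<rfloor> else 0)"
  have Ly: "L_form n \<alpha> y = L q - L q'"
    by (simp add: L_def L_form_def y_def algebra_simps sum_subtractf)
  have xiy: "xi n \<alpha> y = fr q - fr q'"
    using Ly by (simp add: xi_L y_def fr_def frac_def)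
  have keq: "k q = k q'" using qq(4) by (simp add: lab_def)
  have tdiff: "t q - t q' = real N * xi n \<alpha> y"
    using keq by (simp add: t_def xiy algebra_simps)
  have xiy_lt: "\<bar>xi n \<alpha> y\<bar> < 1 / real N"
  proof -
    have "\<bar>t q - t q'\<bar> < 1" using t01[of q] t01[of q'] by linarith
    then have "real N * \<bar>xi n \<alpha> y\<bar> < 1" using tdiff Npos by (simp add: abs_mult)
    then show ?thesis using Npos by (simp add: field_simps)
  qed
  have ybound: "\<forall>j<n. \<bar>y j\<bar> \<le> int Q"
  proof (intro allI impI)
    fix j assume "j < n"
    then show "\<bar>y j\<bar> \<le> int Q" using qD(1)[of j] qD(2)[of j] by (simp add: y_def abs_le_iff)
  qed
  have ay: "(\<Sum>j<Suc n. a j * of_int (y j)) = 0" by (rule H[OF ybound xiy_lt])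
  define dv where "dv = (\<lambda>j. v q j - v q' j)"
  have dv_lt: "dv j = real_of_int (y j) / (real Q + 1)" if "j < n" for j
    using that by (simp add: dv_def v_def y_def diff_divide_distrib)
  have dv_n: "dv n = real N * xi n \<alpha> y" using tdiff by (simp add: dv_def v_def)
  have gsum: "(\<Sum>j<Suc n. g j * dv j) = 0"
  proof -
    have yn: "real_of_int (y n) = xi n \<alpha> y - L_form n \<alpha> y" by (simp add: xi_L)
    have "(\<Sum>j<Suc n. g j * dv j) = (\<Sum>j<n. g j * dv j) + g n * dv n" by simp
    also have "(\<Sum>j<n. g j * dv j) = (\<Sum>j<n. a j * of_int (y j) - a n * (of_int (y j) * \<alpha> j))"
      using hQ by (intro sum.cong) (simp_all add: g_def dv_lt field_simps)
    also have "\<dots> = (\<Sum>j<n. a j * of_int (y j)) - a n * L_form n \<alpha> y"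
      by (simp add: sum_subtractf sum_distrib_left L_form_def)
    also have "g n * dv n = a n * xi n \<alpha> y" using Npos by (simp add: g_def dv_n)
    finally have "(\<Sum>j<Suc n. g j * dv j) = (\<Sum>j<n. a j * of_int (y j)) + a n * of_int (y n)"
      by (simp add: yn algebra_simps)
    also have "\<dots> = (\<Sum>j<Suc n. a j * of_int (y j))" by simp
    finally show ?thesis using ay by simp
  qed
  have Mpos: "real M > 0" using M(2) by simp
  have cell: "\<bar>dv j\<bar> < 1 / real M" if "j \<in> Rest" for j
  proof -
    have "restrict (\<lambda>j. \<lfloor>real M * v q j\<rfloor>) Rest j = restrict (\<lambda>j. \<lfloor>real M * v q' j\<rfloor>) Rest j"
      using qq(4) by (simp add: lab_def)
    then have "\<lfloor>real M * v q j\<rfloor> = \<lfloor>real M * v q' j\<rfloor>" using that by simp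
    then have "\<bar>real M * v q j - real M * v q' j\<bar> < 1" by (rule floor_eq_close)
    then have "real M * \<bar>dv j\<bar> < 1" by (simp add: dv_def abs_mult right_diff_distrib[symmetric])
    then show ?thesis using Mpos by (simp add: field_simps)
  qed
  have j0R: "Rest \<noteq> {}" using cardRest n1 by auto
  have sumR: "(\<Sum>j\<in>Rest. \<bar>dv j\<bar>) < real n / real M"
  proof -
    have "(\<Sum>j\<in>Rest. \<bar>dv j\<bar>) < (\<Sum>j\<in>Rest. 1 / real M)"
      by (rule sum_strict_mono[OF finRest j0R]) (rule cell)
    also have "\<dots> = real n / real M" using cardRest by simp
    finally show ?thesis .
  qed
  have dvj0: "\<bar>dv j0\<bar> < real n / real M"
  proof -
    have split: "(\<Sum>j<Suc n. g j * dv j) = g j0 * dv j0 + (\<Sum>j\<in>Rest. g j * dv j)"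
      unfolding Rest_def using j0(1) by (subst sum.remove[of _ j0]) auto
    have "\<bar>g j0\<bar> * \<bar>dv j0\<bar> = \<bar>\<Sum>j\<in>Rest. g j * dv j\<bar>"
      using split gsum by (simp add: abs_mult[symmetric] eq_neg_iff_add_eq_0[symmetric] abs_minus_cancel)
    also have "\<dots> \<le> (\<Sum>j\<in>Rest. \<bar>g j * dv j\<bar>)" by (rule sum_abs)
    also have "\<dots> \<le> (\<Sum>j\<in>Rest. \<bar>g j0\<bar> * \<bar>dv j\<bar>)"
    proof (rule sum_mono)
      fix j assume "j \<in> Rest"
      then have "\<bar>g j\<bar> \<le> \<bar>g j0\<bar>" using j0(2) by (auto simp: Rest_def)
      then show "\<bar>g j * dv j\<bar> \<le> \<bar>g j0\<bar> * \<bar>dv j\<bar>" by (simp add: abs_mult mult_right_mono)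
    qed
    also have "\<dots> = \<bar>g j0\<bar> * (\<Sum>j\<in>Rest. \<bar>dv j\<bar>)" by (simp add: sum_distrib_left)
    also have "\<dots> < \<bar>g j0\<bar> * (real n / real M)" using gj0 sumR by (intro mult_strict_left_mono) auto
    finally have "\<bar>g j0\<bar> * \<bar>dv j0\<bar> < \<bar>g j0\<bar> * (real n / real M)" .
    moreover have "\<bar>g j0\<bar> > 0" using gj0 by simp
    ultimately show ?thesis using mult_less_cancel_left_pos by blast
  qed
  have dvall: "\<bar>dv j\<bar> < real n / real M" if "j < Suc n" for j
  proof (cases "j = j0")
    case True then show ?thesis using dvj0 by simp
  next
    case False
    then have "\<bar>dv j\<bar> < 1 / real M" using cell that by (simp add: Rest_def)
    moreover have "1 / real M \<le> real n / real M" using n1 Mpos by (simp add: divide_right_mono)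
    ultimately show ?thesis by linarith
  qed
  obtain j1 where j1: "j1 < n" "y j1 \<noteq> 0"
  proof -
    have "\<exists>j<n. q j \<noteq> q' j"
    proof (rule ccontr)
      assume na: "\<not> (\<exists>j<n. q j \<noteq> q' j)"
      have "q j = q' j" for j
      proof (cases "j < n")
        case True then show ?thesis using na by blast
      next
        case False
        then have "j \<notin> {..<n}" by simp
        then show ?thesis using PiE_arb[of q "{..<n}" _ j] PiE_arb[of q' "{..<n}" _ j] qq(1,2)
          unfolding D_def by metis
      qed
      then show False using qq(3) by blast
    qed
    then show ?thesis using that by (auto simp: y_def)
  qed
  define B where "B = real n * (real Q + 1) / real M"
  have Bpos: "B > 0" using n1 Mpos by (simp add: B_def)
  have yB: "\<forall>j<n. real_of_int \<bar>y j\<bar> < B"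
  proof (intro allI impI)
    fix j assume jn: "j < n"
    have "\<bar>real_of_int (y j)\<bar> = (real Q + 1) * \<bar>dv j\<bar>" using dv_lt[OF jn] hQ by (simp add: abs_divide)
    also have "\<dots> < (real Q + 1) * (real n / real M)" using dvall[of j] jn hQ by (intro mult_strict_left_mono) auto
    finally show "real_of_int \<bar>y j\<bar> < B" by (simp add: B_def mult.commute)
  qed
  define sn where "sn = real_of_int (sup_norm n y)"
  have snB: "sn < B" unfolding sn_def by (rule sup_norm_less[OF yB Bpos])
  have sn1: "sn \<ge> 1"
  proof -
    have "\<bar>y j1\<bar> \<le> sup_norm n y" by (rule sup_norm_ge[OF j1(1)])
    moreover have "\<bar>y j1\<bar> \<ge> 1" using j1(2) by linarith
    ultimately show ?thesis unfolding sn_def by linarith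
  qed
  have "dist_int (L_form n \<alpha> y) \<ge> c0 * sn powr (- real n)"
    using bad j1 unfolding sn_def by blast
  then have lb: "c0 * inverse (sn ^ n) \<le> \<bar>xi n \<alpha> y\<bar>"
    using xi_ge_dist[of n \<alpha> y] sn1 powr_neg_nat[of sn n] by simp
  have ub: "\<bar>xi n \<alpha> y\<bar> < real n / (real M * real N)"
  proof -
    have "real N * \<bar>xi n \<alpha> y\<bar> = \<bar>dv n\<bar>" using dv_n Npos by (simp add: abs_mult)
    also have "\<dots> < real n / real M" using dvall[of n] by simp
    finally show ?thesis using Npos Mpos by (simp add: field_simps)
  qed
  have snBn: "sn ^ n < B ^ n" using snB sn1 n1 by (intro power_strict_mono) auto
  have "c0 * inverse (B ^ n) < c0 * inverse (sn ^ n)"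
    using snBn sn1 c0 by (intro mult_strict_left_mono) (auto intro: less_imp_inverse_less)
  then have key: "c0 * inverse (B ^ n) < real n / (real M * real N)" using lb ub by linarith
  have Bn: "B ^ n = real n ^ n * (real Q + 1) ^ n / real M ^ n" by (simp add: B_def power_divide power_mult_distrib)
  have MnN: "real M ^ n * real N > 0" using Mpos Npos by simp
  have "c0 * real M ^ n * (real M * real N) < real n * (real n ^ n * (real Q + 1) ^ n)"
    using key Bpos Mpos Npos n1 by (simp add: Bn field_simps)
  also have "\<dots> \<le> real n * (real n ^ n * (2 * real M ^ n * real N))"
    using N(2) by (intro mult_left_mono) (auto simp: add.commute)
  finally have "(c0 * real M) * (real M ^ n * real N) < (2 * real n ^ (n+1)) * (real M ^ n * real N)"
    by (simp add: algebra_simps)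
  then have "c0 * real M < 2 * real n ^ (n+1)" using MnN by (simp add: mult_less_cancel_right)
  then show False using M(1) by linarith
qed

lemma indep_extend:
  fixes w :: "nat \<Rightarrow> nat \<Rightarrow> int" and a :: "nat \<Rightarrow> real"
  assumes ind: "int_vecs_indep (Suc n) n w"
    and aw: "\<forall>i<n. (\<Sum>j<Suc n. a j * of_int (w i j)) = 0"
    and au: "(\<Sum>j<Suc n. a j * of_int (u j)) \<noteq> 0"
  shows "int_vecs_indep (Suc n) (Suc n) (w(n := u))"
  unfolding int_vecs_indep_def
proof (intro allI impI)
  fix c :: "nat \<Rightarrow> rat" and i
  assume h: "\<forall>j<Suc n. (\<Sum>i<Suc n. c i * of_int ((w(n := u)) i j)) = 0" and iln: "i < Suc n"
  let ?w = "w(n := u)"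
  have h': "(\<Sum>i<Suc n. of_rat (c i) * (of_int (?w i j) :: real)) = 0" if "j < Suc n" for j
  proof -
    have e: "(\<Sum>i<Suc n. c i * of_int (?w i j)) = 0" using h that by blast
    have "(of_rat (\<Sum>i<Suc n. c i * of_int (?w i j)) :: real) = 0" by (simp only: e of_rat_0)
    then show ?thesis by (simp only: of_rat_sum of_rat_mult of_rat_of_int_eq)
  qed
  have "0 = (\<Sum>j<Suc n. a j * (\<Sum>i<Suc n. of_rat (c i) * (of_int (?w i j) :: real)))"
    using h' by simp
  also have "\<dots> = (\<Sum>j<Suc n. \<Sum>i<Suc n. a j * (of_rat (c i) * (of_int (?w i j) :: real)))"
    by (simp only: sum_distrib_left)
  also have "\<dots> = (\<Sum>i<Suc n. \<Sum>j<Suc n. a j * (of_rat (c i) * (of_int (?w i j) :: real)))"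
    by (rule sum.swap)
  also have "\<dots> = (\<Sum>i<Suc n. of_rat (c i) * (\<Sum>j<Suc n. a j * of_int (?w i j)))"
    by (rule sum.cong[OF refl]) (simp only: sum_distrib_left mult.left_commute)
  also have "\<dots> = of_rat (c n) * (\<Sum>j<Suc n. a j * of_int (u j))"
    using aw by simp
  finally have cn: "c n = 0" using au by simp
  have "\<forall>j<Suc n. (\<Sum>i<n. c i * of_int (w i j)) = 0"
  proof (intro allI impI)
    fix j assume "j < Suc n"
    then have "(\<Sum>i<Suc n. c i * of_int (?w i j)) = 0" using h by blast
    then show "(\<Sum>i<n. c i * of_int (w i j)) = 0" using cn by simp
  qed
  then have "\<forall>i<n. c i = 0" using ind unfolding int_vecs_indep_def by blast
  then show "c i = 0" using cn iln less_Suc_eq by auto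
qed

lemma indep_shift:
  assumes "int_vecs_indep l (Suc (Suc i)) w"
  shows "int_vecs_indep l (Suc i) (w(i := w (Suc i)))"
  unfolding int_vecs_indep_def
proof (intro allI impI)
  fix c :: "nat \<Rightarrow> rat" and i'
  assume h: "\<forall>j<l. (\<Sum>i'<Suc i. c i' * of_int ((w(i := w (Suc i))) i' j)) = 0" and i': "i' < Suc i"
  define c' where "c' = (\<lambda>k. if k < i then c k else if k = i then 0 else if k = Suc i then c i else 0)"
  have "\<forall>j<l. (\<Sum>k<Suc (Suc i). c' k * of_int (w k j)) = 0"
  proof (intro allI impI)
    fix j assume "j < l"
    then have e: "(\<Sum>i'<Suc i. c i' * of_int ((w(i := w (Suc i))) i' j)) = 0" using h by blast
    have "(\<Sum>k<Suc (Suc i). c' k * of_int (w k j)) = (\<Sum>k<i. c k * of_int (w k j)) + c i * of_int (w (Suc i) j)"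
      by (simp add: c'_def)
    also have "\<dots> = (\<Sum>i'<Suc i. c i' * of_int ((w(i := w (Suc i))) i' j))"
      by simp
    finally show "(\<Sum>k<Suc (Suc i). c' k * of_int (w k j)) = 0" using e by simp
  qed
  then have z: "\<forall>k<Suc (Suc i). c' k = 0" using assms unfolding int_vecs_indep_def by blast
  show "c i' = 0"
  proof (cases "i' = i")
    case True
    have "c' (Suc i) = 0" using z by blast
    then show ?thesis using True by (simp add: c'_def)
  next
    case False
    then have "i' < i" using i' by simp
    moreover have "c' i' = 0" using z i' by simp
    ultimately show ?thesis by (simp add: c'_def)
  qed
qed

lemma indep_pair:
  assumes "int_vecs_indep l (Suc (Suc i)) w" "s = 1 \<or> s = -1"
    and "\<forall>j<l. w i j = s * w (Suc i) j"
  shows False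
proof -
  define c :: "nat \<Rightarrow> rat" where "c = (\<lambda>k. if k = i then 1 else if k = Suc i then - of_int s else 0)"
  have P: "\<forall>j<l. (\<Sum>k<Suc (Suc i). c k * of_int (w k j)) = 0"
  proof (intro allI impI)
    fix j assume "j < l"
    then have "w i j = s * w (Suc i) j" using assms(3) by blast
    moreover have "(\<Sum>k<Suc (Suc i). c k * of_int (w k j)) = of_int (w i j) - of_int s * of_int (w (Suc i) j)"
      by (simp add: c_def)
    ultimately show "(\<Sum>k<Suc (Suc i). c k * of_int (w k j)) = 0" by simp
  qed
  have "\<forall>k<Suc (Suc i). c k = 0"
    using assms(1)[unfolded int_vecs_indep_def, THEN spec[where x=c]] P by (rule mp)
  then have "c i = 0" by simp
  then show False by (simp add: c_def)
qed

lemma abs_int_real: "\<bar>z\<bar> \<le> int Q \<Longrightarrow> \<bar>real_of_int z\<bar> \<le> real Q"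
  by (metis of_int_abs of_int_le_iff of_int_of_nat_eq)

lemma upper_exists:
  fixes n M m :: nat and \<alpha> a :: "nat \<Rightarrow> real" and c0 A :: real
  assumes n1: "n \<ge> 1"
    and bad: "\<forall>q. (\<exists>j<n. q j \<noteq> 0) \<longrightarrow>
        dist_int (L_form n \<alpha> q) \<ge> c0 * (real_of_int (sup_norm n q)) powr (- real n)"
    and c0: "c0 > 0"
    and M: "c0 * real M \<ge> 2 * real n ^ (n+1)" "M \<ge> 1"
    and A: "A = (\<Sum>j<n. \<bar>\<alpha> j\<bar>) + 1"
    and a: "\<exists>j<Suc n. a j \<noteq> 0"
    and m: "m \<ge> 1"
  shows "\<exists>u. (\<forall>j<Suc n. \<bar>u j\<bar> \<le> int m) \<and> (\<Sum>j<Suc n. a j * of_int (u j)) \<noteq> 0 \<and>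
     \<bar>xi n \<alpha> u\<bar> < (2 * (real M * A) ^ n + A * (2 * real M * A) ^ n) * real m powr (- real n)"
proof -
  have A1: "A \<ge> 1" using A by (simp add: sum_nonneg)
  have mpos: "real m > 0" using m by simp
  have mp: "real m powr (- real n) = inverse (real m ^ n)" using powr_neg_nat[OF mpos] .
  have Mpos: "real M > 0" using M(2) by simp
  define C1 where "C1 = 2 * (real M * A) ^ n"
  define C2 where "C2 = A * (2 * real M * A) ^ n"
  have C1pos: "C1 \<ge> 0" using A1 by (simp add: C1_def)
  have C2pos: "C2 \<ge> 0" using A1 by (simp add: C2_def)
  show ?thesis
  proof (cases "real m \<ge> 2 * real M * A")
    case True
    define Q where "Q = nat \<lfloor>real m / A\<rfloor>"
    have mA0: "real m / A \<ge> 0" using A1 by simp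
    have Qeq: "real Q = of_int \<lfloor>real m / A\<rfloor>" using mA0 by (simp add: Q_def)
    have hQ1: "real Q \<le> real m / A" using Qeq by linarith
    have hQ2: "real m / A < real Q + 1" using Qeq by linarith
    have "2 * real M \<le> real m / A" using True A1 by (simp add: field_simps)
    then have QM: "2 * real M < real Q + 1" using hQ2 by linarith
    have Q1: "Q \<ge> 1" using QM Mpos M(2) by linarith
    define X where "X = real ((Q+1)^n) / (2 * real M ^ n)"
    have "(2 * real M) ^ n \<le> (real Q + 1) ^ n" using QM Mpos by (intro power_mono) auto
    moreover have "2 * real M ^ n \<le> (2 * real M) ^ n"
    proof -
      have "(2::real) \<le> 2 ^ n" using n1 by (metis one_le_numeral power_increasing power_one_right)
      then show ?thesis using Mpos by (simp add: power_mult_distrib)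
    qed
    ultimately have P: "2 * real M ^ n \<le> (real Q + 1) ^ n" by linarith
    have X1: "X \<ge> 1" using P Mpos by (simp add: X_def field_simps add.commute)
    define N where "N = nat \<lceil>X\<rceil>"
    have NX: "real N \<ge> X" "real N < X + 1" using X1 by (simp_all add: N_def) linarith
    have N1: "N \<ge> 1" using NX X1 by linarith
    have Npos: "real N > 0" using N1 by simp
    have N2: "real ((Q+1)^n) \<le> 2 * real M ^ n * real N"
      using NX(1) Mpos by (simp add: X_def field_simps)
    have "real N * real M ^ n < 2 * X * real M ^ n" using NX X1 Mpos by simp
    also have "\<dots> = real ((Q+1)^n)" using Mpos by (simp add: X_def)
    finally have N3: "N * M^n < (Q+1)^n" by (simp flip: of_nat_power of_nat_mult)
    obtain y where y: "\<forall>j<n. \<bar>y j\<bar> \<le> int Q" "\<bar>xi n \<alpha> y\<bar> < 1 / real N"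
        "(\<Sum>j<Suc n. a j * of_int (y j)) \<noteq> 0"
      using core_count[OF n1 bad c0 M N1 N2 N3 a] by blast
    have e1: "real m * 1 \<le> real m * A" using A1 mpos by (intro mult_left_mono) auto
    have "real m / A \<le> real m" using e1 A1 by (simp add: divide_le_eq)
    then have Qm: "real Q \<le> real m" using hQ1 by linarith
    have yn: "\<bar>y n\<bar> \<le> int m"
    proof -
      have "\<bar>L_form n \<alpha> y\<bar> \<le> (\<Sum>j<n. \<bar>of_int (y j) * \<alpha> j\<bar>)"
        unfolding L_form_def by (rule sum_abs)
      also have "\<dots> \<le> (\<Sum>j<n. real Q * \<bar>\<alpha> j\<bar>)"
      proof (rule sum_mono)
        fix j assume "j \<in> {..<n}"
        then have "\<bar>real_of_int (y j)\<bar> \<le> real Q" using y(1) abs_int_real by blast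
        then show "\<bar>of_int (y j) * \<alpha> j\<bar> \<le> real Q * \<bar>\<alpha> j\<bar>"
          by (simp add: abs_mult mult_right_mono)
      qed
      also have "\<dots> = real Q * (A - 1)" using A by (simp add: sum_distrib_left)
      finally have Lb: "\<bar>L_form n \<alpha> y\<bar> \<le> real Q * (A - 1)" .
      have "1 / real N \<le> 1" using N1 by simp
      then have xb: "\<bar>xi n \<alpha> y\<bar> < 1" using y(2) by linarith
      have "real_of_int (y n) = xi n \<alpha> y - L_form n \<alpha> y" by (simp add: xi_L)
      then have "\<bar>real_of_int (y n)\<bar> < 1 + real Q * (A - 1)" using Lb xb by linarith
      also have "\<dots> \<le> real Q * A" using Q1 by (simp add: algebra_simps)
      also have "\<dots> \<le> real m" using hQ1 A1 by (simp add: field_simps)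
      finally show ?thesis by linarith
    qed
    have ub: "\<forall>j<Suc n. \<bar>y j\<bar> \<le> int m"
    proof (intro allI impI)
      fix j assume "j < Suc n"
      then consider "j < n" | "j = n" by linarith
      then show "\<bar>y j\<bar> \<le> int m"
      proof cases
        case 1 then have "\<bar>real_of_int (y j)\<bar> \<le> real Q" using y(1) abs_int_real by blast
        then show ?thesis using Qm by linarith
      next
        case 2 then show ?thesis using yn by simp
      qed
    qed
    have "1 / real N \<le> 1 / X" using NX X1 by (intro divide_left_mono) auto
    also have "\<dots> = 2 * real M ^ n / (real Q + 1) ^ n" using Mpos by (simp add: X_def add.commute)
    also have "\<dots> \<le> 2 * real M ^ n / (real m / A) ^ n"
    proof -
      have "(real m / A) ^ n \<le> (real Q + 1) ^ n" using hQ2 mA0 by (intro power_mono) auto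
      moreover have "(real m / A) ^ n > 0" using mpos A1 by simp
      ultimately show ?thesis using Mpos by (intro divide_left_mono) auto
    qed
    also have "\<dots> = C1 * inverse (real m ^ n)"
      using A1 mpos by (simp add: C1_def power_divide power_mult_distrib field_simps)
    also have "\<dots> \<le> (C1 + C2) * inverse (real m ^ n)"
      using C2pos mpos by (intro mult_right_mono) auto
    finally have "\<bar>xi n \<alpha> y\<bar> < (C1 + C2) * real m powr (- real n)" unfolding mp using y(2) by linarith
    then show ?thesis using ub y(3) unfolding C1_def C2_def by blast
  next
    case False
    obtain j where j: "j < Suc n" "a j \<noteq> 0" using a by blast
    define u where "u = (\<lambda>i. if i = j then (1::int) else 0)"
    have ub: "\<forall>i<Suc n. \<bar>u i\<bar> \<le> int m" using m by (simp add: u_def)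
    have au: "(\<Sum>i<Suc n. a i * of_int (u i)) = a j"
      using j(1) by (simp add: u_def if_distrib sum.delta cong: if_cong)
    have xiu: "\<bar>xi n \<alpha> u\<bar> \<le> A"
    proof (cases "j < n")
      case True
      have f: "(\<lambda>i. of_int (u i) * \<alpha> i) = (\<lambda>i. if i = j then \<alpha> j else 0)"
        by (auto simp: u_def fun_eq_iff)
      have "xi n \<alpha> u = (\<Sum>i<n. of_int (u i) * \<alpha> i)" using True by (simp add: xi_def u_def)
      also have "\<dots> = \<alpha> j" unfolding f using True by simp
      finally have "xi n \<alpha> u = \<alpha> j" .
      moreover have "\<bar>\<alpha> j\<bar> \<le> (\<Sum>i<n. \<bar>\<alpha> i\<bar>)"
        using True by (intro member_le_sum) auto
      ultimately show ?thesis using A by simp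
    next
      case False
      then have "j = n" using j(1) by simp
      then have "xi n \<alpha> u = 1" by (simp add: xi_def u_def)
      then show ?thesis using A1 by simp
    qed
    have "real m ^ n < (2 * real M * A) ^ n"
      using False mpos n1 by (intro power_strict_mono) auto
    then have "A < C2 * inverse (real m ^ n)"
      using A1 mpos by (simp add: C2_def field_simps)
    also have "\<dots> \<le> (C1 + C2) * inverse (real m ^ n)"
      using C1pos mpos by (intro mult_right_mono) auto
    finally have "\<bar>xi n \<alpha> u\<bar> < (C1 + C2) * real m powr (- real n)" unfolding mp using xiu by linarith
    then show ?thesis using ub au j(2) unfolding C1_def C2_def by auto
  qed
qed

theorem lemma5p3:
  fixes n :: nat and \<alpha> :: "nat \<Rightarrow> real"
  assumes "Q_lin_indep_with_1 n \<alpha>"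
    and "badly_approximable n \<alpha>"
  shows "\<exists>c C. c > 0 \<and> C > 0 \<and>
    (\<forall>m :: nat. m \<ge> 1 \<longrightarrow> (\<forall>w. minkowski_rows n \<alpha> m w \<longrightarrow>
       c * real m powr (- real n) < \<bar>xi n \<alpha> (w 0)\<bar> \<and>
       (\<forall>i < n. \<bar>xi n \<alpha> (w i)\<bar> < \<bar>xi n \<alpha> (w (Suc i))\<bar>) \<and>
       \<bar>xi n \<alpha> (w n)\<bar> < C * real m powr (- real n)))"
proof (cases "n = 0")
  case True
  have "\<forall>m :: nat. m \<ge> 1 \<longrightarrow> (\<forall>w. minkowski_rows n \<alpha> m w \<longrightarrow>
       (1/2) * real m powr (- real n) < \<bar>xi n \<alpha> (w 0)\<bar> \<and>
       (\<forall>i < n. \<bar>xi n \<alpha> (w i)\<bar> < \<bar>xi n \<alpha> (w (Suc i))\<bar>) \<and>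
       \<bar>xi n \<alpha> (w n)\<bar> < 2 * real m powr (- real n))"
  proof (intro allI impI)
    fix m :: nat and w assume m: "m \<ge> 1" and mr: "minkowski_rows n \<alpha> m w"
    have row: "(\<forall>j < Suc n. \<bar>w 0 j\<bar> \<le> int m) \<and>
        int_vecs_indep (Suc n) (Suc 0) w \<and>
        (\<exists>j < Suc n. w 0 j > 0 \<and> (\<forall>j' < j. w 0 j' = 0)) \<and>
        (\<forall>u :: nat \<Rightarrow> int.
           (\<forall>j < Suc n. \<bar>u j\<bar> \<le> int m) \<and> int_vecs_indep (Suc n) (Suc 0) (w(0 := u))
           \<longrightarrow> \<bar>xi n \<alpha> (w 0)\<bar> \<le> \<bar>xi n \<alpha> u\<bar>)"
      using mr unfolding minkowski_rows_def by blast
    have pos: "w 0 0 > 0" using row True by auto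
    define u :: "nat \<Rightarrow> int" where "u = (\<lambda>_. 1)"
    have "int_vecs_indep (Suc n) (Suc 0) (w(0 := u))"
      using True by (simp add: int_vecs_indep_def u_def)
    moreover have "\<forall>j < Suc n. \<bar>u j\<bar> \<le> int m" using m by (simp add: u_def)
    ultimately have "\<bar>xi n \<alpha> (w 0)\<bar> \<le> \<bar>xi n \<alpha> u\<bar>" using row by blast
    then have "w 0 0 = 1" using pos True by (simp add: xi_def u_def)
    then show "(1/2) * real m powr (- real n) < \<bar>xi n \<alpha> (w 0)\<bar> \<and>
       (\<forall>i < n. \<bar>xi n \<alpha> (w i)\<bar> < \<bar>xi n \<alpha> (w (Suc i))\<bar>) \<and>
       \<bar>xi n \<alpha> (w n)\<bar> < 2 * real m powr (- real n)"
      using True m by (simp add: xi_def)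
  qed
  then show ?thesis by (intro exI[of _ "1/2"] exI[of _ 2]) simp
next
  case False
  then have n1: "n \<ge> 1" by simp
  obtain c0 where c0: "c0 > 0" and bad: "\<forall>q :: nat \<Rightarrow> int. (\<exists>j<n. q j \<noteq> 0) \<longrightarrow>
        dist_int (L_form n \<alpha> q) \<ge> c0 * (real_of_int (sup_norm n q)) powr (- real n)"
    using assms(2) unfolding badly_approximable_def by blast
  define M where "M = nat \<lceil>2 * real n ^ (n+1) / c0\<rceil> + 1"
  have M1: "M \<ge> 1" by (simp add: M_def)
  have "real M \<ge> 2 * real n ^ (n+1) / c0" unfolding M_def by linarith
  then have Mc: "c0 * real M \<ge> 2 * real n ^ (n+1)" using c0 by (simp add: field_simps)
  define A where "A = (\<Sum>j<n. \<bar>\<alpha> j\<bar>) + 1"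
  have A1: "A \<ge> 1" by (simp add: A_def sum_nonneg)
  define C where "C = 2 * (real M * A) ^ n + A * (2 * real M * A) ^ n"
  have Cpos: "C > 0" using A1 M1 by (simp add: C_def add_pos_nonneg)
  define c where "c = min c0 1 / 2"
  have cpos: "c > 0" using c0 by (simp add: c_def)
  have main: "\<forall>m :: nat. m \<ge> 1 \<longrightarrow> (\<forall>w. minkowski_rows n \<alpha> m w \<longrightarrow>
       c * real m powr (- real n) < \<bar>xi n \<alpha> (w 0)\<bar> \<and>
       (\<forall>i < n. \<bar>xi n \<alpha> (w i)\<bar> < \<bar>xi n \<alpha> (w (Suc i))\<bar>) \<and>
       \<bar>xi n \<alpha> (w n)\<bar> < C * real m powr (- real n))"
  proof (intro allI impI)
    fix m :: nat and w assume m: "m \<ge> 1" and mr: "minkowski_rows n \<alpha> m w"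
    have mpos: "real m > 0" using m by simp
    have mp: "real m powr (- real n) = inverse (real m ^ n)" using powr_neg_nat[OF mpos] .
    have rows: "\<And>i. i < Suc n \<Longrightarrow> (\<forall>j < Suc n. \<bar>w i j\<bar> \<le> int m) \<and>
        int_vecs_indep (Suc n) (Suc i) w \<and>
        (\<exists>j < Suc n. w i j > 0 \<and> (\<forall>j' < j. w i j' = 0)) \<and>
        (\<forall>u :: nat \<Rightarrow> int.
           (\<forall>j < Suc n. \<bar>u j\<bar> \<le> int m) \<and> int_vecs_indep (Suc n) (Suc i) (w(i := u))
           \<longrightarrow> \<bar>xi n \<alpha> (w i)\<bar> \<le> \<bar>xi n \<alpha> u\<bar>)"
      using mr unfolding minkowski_rows_def by blast
    have low: "c * real m powr (- real n) < \<bar>xi n \<alpha> (w 0)\<bar>"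
    proof -
      have r0: "\<forall>j < Suc n. \<bar>w 0 j\<bar> \<le> int m" "\<exists>j < Suc n. w 0 j > 0" using rows[of 0] by auto
      have p1: "1 \<le> real m ^ n" using m by (intro one_le_power) simp
      have mi: "inverse (real m ^ n) \<le> 1" using p1 by (metis inverse_1 le_imp_inverse_le zero_less_one)
      have mi0: "inverse (real m ^ n) > 0" using mpos by simp
      show ?thesis
      proof (cases "\<exists>j<n. w 0 j \<noteq> 0")
        case True
        define s where "s = real_of_int (sup_norm n (w 0))"
        have "dist_int (L_form n \<alpha> (w 0)) \<ge> c0 * s powr (- real n)"
          using bad True unfolding s_def by blast
        then have d: "\<bar>xi n \<alpha> (w 0)\<bar> \<ge> c0 * s powr (- real n)"
          using xi_ge_dist[of n \<alpha> "w 0"] by linarith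
        obtain j where j: "j < n" "w 0 j \<noteq> 0" using True by blast
        have "\<bar>w 0 j\<bar> \<le> sup_norm n (w 0)" by (rule sup_norm_ge[OF j(1)])
        then have s1: "s \<ge> 1" using j(2) unfolding s_def by linarith
        have "sup_norm n (w 0) \<le> int m" using r0(1) by (intro sup_norm_le) auto
        then have sm: "s \<le> real m" unfolding s_def by linarith
        have "s ^ n \<le> real m ^ n" using sm s1 by (intro power_mono) auto
        then have "inverse (real m ^ n) \<le> inverse (s ^ n)" using s1 by (intro le_imp_inverse_le) auto
        then have "c0 * inverse (real m ^ n) \<le> c0 * s powr (- real n)"
          using c0 s1 powr_neg_nat[of s n] by simp
        moreover have "c * inverse (real m ^ n) < c0 * inverse (real m ^ n)"
          using mi0 c0 by (intro mult_strict_right_mono) (auto simp: c_def)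
        ultimately show ?thesis unfolding mp using d by linarith
      next
        case False
        then have wn: "w 0 n \<noteq> 0" using r0(2) less_Suc_eq by fastforce
        have "xi n \<alpha> (w 0) = of_int (w 0 n)" using False by (simp add: xi_def)
        then have "\<bar>xi n \<alpha> (w 0)\<bar> \<ge> 1" using wn by linarith
        moreover have "c * inverse (real m ^ n) < 1"
        proof -
          have "c \<le> 1/2" by (simp add: c_def)
          then have "c * inverse (real m ^ n) \<le> 1/2 * 1" using mi mi0 cpos by (intro mult_mono) auto
          then show ?thesis by simp
        qed
        ultimately show ?thesis unfolding mp by linarith
      qed
    qed
    have chain: "\<forall>i < n. \<bar>xi n \<alpha> (w i)\<bar> < \<bar>xi n \<alpha> (w (Suc i))\<bar>"
    proof (intro allI impI)
      fix i assume i: "i < n"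
      have ri: "\<forall>u :: nat \<Rightarrow> int.
           (\<forall>j < Suc n. \<bar>u j\<bar> \<le> int m) \<and> int_vecs_indep (Suc n) (Suc i) (w(i := u))
           \<longrightarrow> \<bar>xi n \<alpha> (w i)\<bar> \<le> \<bar>xi n \<alpha> u\<bar>" using rows[of i] i by auto
      have rs: "\<forall>j < Suc n. \<bar>w (Suc i) j\<bar> \<le> int m" "int_vecs_indep (Suc n) (Suc (Suc i)) w"
        using rows[of "Suc i"] i by auto
      have le: "\<bar>xi n \<alpha> (w i)\<bar> \<le> \<bar>xi n \<alpha> (w (Suc i))\<bar>"
        using ri rs(1) indep_shift[OF rs(2)] by blast
      have ne: "\<bar>xi n \<alpha> (w i)\<bar> \<noteq> \<bar>xi n \<alpha> (w (Suc i))\<bar>"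
      proof
        assume eq: "\<bar>xi n \<alpha> (w i)\<bar> = \<bar>xi n \<alpha> (w (Suc i))\<bar>"
        then consider "xi n \<alpha> (w i) = xi n \<alpha> (w (Suc i))" | "xi n \<alpha> (w i) = - xi n \<alpha> (w (Suc i))"
          by linarith
        then show False
        proof cases
          case 1
          then have "xi n \<alpha> (\<lambda>j. w i j - w (Suc i) j) = 0" by (simp add: xi_diff)
          then have "\<forall>j\<le>n. w i j - w (Suc i) j = 0" by (rule xi_zero[OF assms(1)])
          then have "\<forall>j<Suc n. w i j = 1 * w (Suc i) j" by auto
          then show False using indep_pair[OF rs(2), of 1] by simp
        next
          case 2
          then have "xi n \<alpha> (\<lambda>j. w i j + w (Suc i) j) = 0" by (simp add: xi_add)
          then have "\<forall>j\<le>n. w i j + w (Suc i) j = 0" by (rule xi_zero[OF assms(1)])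
          then have "\<forall>j<Suc n. w i j = (-1) * w (Suc i) j"
            by (metis add.commute add_eq_0_iff less_Suc_eq_le mult_minus1)
          then show False using indep_pair[OF rs(2), of "-1"] by simp
        qed
      qed
      show "\<bar>xi n \<alpha> (w i)\<bar> < \<bar>xi n \<alpha> (w (Suc i))\<bar>" using le ne by linarith
    qed
    have up: "\<bar>xi n \<alpha> (w n)\<bar> < C * real m powr (- real n)"
    proof -
      obtain a where a: "\<exists>j<Suc n. a j \<noteq> 0"
          "\<forall>i\<in>{..<n}. (\<Sum>j<Suc n. a j * real_of_int (w i j)) = 0"
        using exists_orth[of "{..<n}" "Suc n" "\<lambda>i j. real_of_int (w i j)"] by auto
      obtain u where u: "\<forall>j<Suc n. \<bar>u j\<bar> \<le> int m" "(\<Sum>j<Suc n. a j * of_int (u j)) \<noteq> 0"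
          "\<bar>xi n \<alpha> u\<bar> < C * real m powr (- real n)"
        using upper_exists[OF n1 bad c0 Mc M1 A_def a(1) m] unfolding C_def by blast
      have "int_vecs_indep (Suc n) (Suc (n - 1)) w" using rows[of "n - 1"] n1 by auto
      then have indn: "int_vecs_indep (Suc n) n w" using n1 by simp
      have "int_vecs_indep (Suc n) (Suc n) (w(n := u))"
        using indep_extend[OF indn _ u(2)] a(2) by blast
      then have "\<bar>xi n \<alpha> (w n)\<bar> \<le> \<bar>xi n \<alpha> u\<bar>" using rows[of n] u(1) by blast
      then show ?thesis using u(3) by linarith
    qed
    show "c * real m powr (- real n) < \<bar>xi n \<alpha> (w 0)\<bar> \<and>
       (\<forall>i < n. \<bar>xi n \<alpha> (w i)\<bar> < \<bar>xi n \<alpha> (w (Suc i))\<bar>) \<and>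
       \<bar>xi n \<alpha> (w n)\<bar> < C * real m powr (- real n)" using low chain up by blast
  qed
  show ?thesis using cpos Cpos main by blast
qed

end
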